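(* Let $\mathbb{K}$ be a non-Archimedean valued field with residue field $\mathfrak{r}$ such that $\chi(\mathbb{K}) = \chi(\mathfrak{r})$. Then for every topological group $G$ and every $n \geq 1$, the comparison map $c^n : H^n_{cb}(G, \mathbb{K}) \to H^n_c(G, \mathbb{K})$ is injective.
   Context: A non-Archimedean valued field is a field with an absolute value satisfying the ultrametric inequality; $\mathfrak{o}=\{|x|_\mathbb{K}\le1\}$, $\mathfrak{m}=\{|x|_\mathbb{K}<1\}$, $\mathfrak{r}=\mathfrak{o}/\mathfrak{m}$, $\chi$ = characteristic. $\mathbb{K}$ is a trivial $G$-module. Bar resolution: $\overline{C}^0=\mathbb{K}$, for $n\ge1$ $\overline{C}^n(G,\mathbb{K})$ = continuous maps $G^n\to\mathbb{K}$ and $\overline{C}^n_b(G,\mathbb{K})$ = bounded continuous ones, coboundary $\delta^nf(g_1,\dots,g_{n+1})=f(g_2,\dots,g_{n+1})+\sum_{i=1}^n(-1)^if(g_1,\dots,g_ig_{i+1},\dots,g_{n+1})+(-1)^{n+1}f(g_1,\dots,g_n)$. $H^\bullet_c$ and $H^\bullet_{cb}$ are the cohomologies of these complexes, and the comparison map is induced by inclusion. *)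

theory Defs
  imports "HOL-Analysis.Analysis" "HOL-Algebra.Group"
begin

definition nonarch_abs :: "('k::field \<Rightarrow> real) \<Rightarrow> bool" where
  "nonarch_abs av \<longleftrightarrow>
     (\<forall>x. 0 \<le> av x) \<and> (\<forall>x. av x = 0 \<longleftrightarrow> x = 0) \<and>
     (\<forall>x y. av (x * y) = av x * av y) \<and>
     (\<forall>x y. av (x + y) \<le> max (av x) (av y))"

text \<open>Characteristic of the residue field o/m: defined exactly as CHAR for the
  ring o/m, i.e. the Gcd of all n with n*1 = 0 in o/m, i.e. n*1 in m.\<close>
definition residue_char :: "('k::field \<Rightarrow> real) \<Rightarrow> nat" where
  "residue_char av = Gcd {n::nat. av (of_nat n :: 'k) < 1}"

definition topological_group :: "('g, 'b) monoid_scheme \<Rightarrow> 'g topology \<Rightarrow> bool" where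
  "topological_group G T \<longleftrightarrow> group G \<and> topspace T = carrier G \<and>
     continuous_map (prod_topology T T) T (\<lambda>(x, y). x \<otimes>\<^bsub>G\<^esub> y) \<and>
     continuous_map T T (\<lambda>x. inv\<^bsub>G\<^esub> x)"

definition Gpow :: "'g topology \<Rightarrow> nat \<Rightarrow> (nat \<Rightarrow> 'g) topology" where
  "Gpow T n = product_topology (\<lambda>_. T) {..<n}"

definition cont_into :: "('k::field \<Rightarrow> real) \<Rightarrow> 'a topology \<Rightarrow> ('a \<Rightarrow> 'k) \<Rightarrow> bool" where
  "cont_into av X f \<longleftrightarrow>
     (\<forall>x\<in>topspace X. \<forall>e>0. \<exists>U. openin X U \<and> x \<in> U \<and>
        (\<forall>y\<in>U. av (f y - f x) < e))"

definition Cc :: "('k::field \<Rightarrow> real) \<Rightarrow> 'g topology \<Rightarrow> nat \<Rightarrow> ((nat \<Rightarrow> 'g) \<Rightarrow> 'k) set" where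
  "Cc av T n = {f. cont_into av (Gpow T n) f \<and> (\<forall>x. x \<notin> topspace (Gpow T n) \<longrightarrow> f x = 0)}"

definition Cb :: "('k::field \<Rightarrow> real) \<Rightarrow> 'g topology \<Rightarrow> nat \<Rightarrow> ((nat \<Rightarrow> 'g) \<Rightarrow> 'k) set" where
  "Cb av T n = {f \<in> Cc av T n. \<exists>B. \<forall>x\<in>topspace (Gpow T n). av (f x) \<le> B}"

text \<open>Merging positions i-1 and i (1 \<le> i \<le> n) of a tuple (g_1,...,g_{n+1}), 0-indexed.\<close>
definition merge_at :: "('g, 'b) monoid_scheme \<Rightarrow> nat \<Rightarrow> nat \<Rightarrow> (nat \<Rightarrow> 'g) \<Rightarrow> (nat \<Rightarrow> 'g)" where
  "merge_at G n i g = restrict (\<lambda>j. if j < i - 1 then g j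
                                    else if j = i - 1 then g (i - 1) \<otimes>\<^bsub>G\<^esub> g i
                                    else g (Suc j)) {..<n}"

text \<open>The coboundary delta^n : C^n \<rightarrow> C^(n+1) of the bar resolution (trivial coefficients).\<close>
definition delta :: "('g, 'b) monoid_scheme \<Rightarrow> 'g topology \<Rightarrow> nat \<Rightarrow> ((nat \<Rightarrow> 'g) \<Rightarrow> 'k::field) \<Rightarrow> ((nat \<Rightarrow> 'g) \<Rightarrow> 'k)" where
  "delta G T n f = (\<lambda>g. if g \<in> topspace (Gpow T (Suc n)) then
       f (restrict (\<lambda>j. g (Suc j)) {..<n})
       + (\<Sum>i=1..n. (-1) ^ i * f (merge_at G n i g))
       + (-1) ^ (Suc n) * f (restrict g {..<n})
     else 0)"

definition Zc where "Zc av G T n = {f \<in> Cc av T n. delta G T n f = (\<lambda>_. 0)}"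
definition Zb where "Zb av G T n = {f \<in> Cb av T n. delta G T n f = (\<lambda>_. 0)}"

text \<open>Coboundaries in degree n \<ge> 1.\<close>
definition Bc where "Bc av G T n = (\<lambda>h. delta G T (n - 1) h) ` Cc av T (n - 1)"
definition Bb where "Bb av G T n = (\<lambda>h. delta G T (n - 1) h) ` Cb av T (n - 1)"

definition cls_c where "cls_c av G T n f = {g \<in> Zc av G T n. f - g \<in> Bc av G T n}"
definition cls_b where "cls_b av G T n f = {g \<in> Zb av G T n. f - g \<in> Bb av G T n}"

definition Hc where "Hc av G T n = cls_c av G T n ` Zc av G T n"
definition Hcb where "Hcb av G T n = cls_b av G T n ` Zb av G T n"

definition comparison where
  "comparison av G T n C = cls_c av G T n (SOME f. f \<in> C)"

end

theory Submission imports Defs "HOL-Library.Function_Algebras" begin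

definition pfset :: "'k::field set" where
  "pfset = {x. \<exists>a b. x = of_int a / of_int b}"

lemma pf_0: "0 \<in> pfset" unfolding pfset_def by (auto intro!: exI[of _ 0])
lemma pf_1: "1 \<in> pfset" unfolding pfset_def by (auto intro!: exI[of _ 1])
lemma pf_uminus: "x \<in> pfset \<Longrightarrow> - x \<in> pfset"
  unfolding pfset_def
proof clarify
  fix a b assume "x = (of_int a :: 'a) / of_int b"
  have "- ((of_int a :: 'a) / of_int b) = of_int (- a) / of_int b" by simp
  then show "\<exists>c d. - ((of_int a :: 'a) / of_int b) = of_int c / of_int d" by blast
qed
lemma pf_times: "x \<in> pfset \<Longrightarrow> y \<in> pfset \<Longrightarrow> x * y \<in> pfset"
  unfolding pfset_def
proof clarify
  fix a b c d
  have "((of_int a :: 'a) / of_int b) * (of_int c / of_int d) = of_int (a*c) / of_int (b*d)" by simp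
  then show "\<exists>e f. ((of_int a :: 'a) / of_int b) * (of_int c / of_int d) = of_int e / of_int f" by blast
qed
lemma pf_inverse: "x \<in> pfset \<Longrightarrow> inverse x \<in> pfset"
  unfolding pfset_def
proof clarify
  fix a b
  have "inverse ((of_int a :: 'a) / of_int b) = of_int b / of_int a" by (simp add: inverse_divide)
  then show "\<exists>e f. inverse ((of_int a :: 'a) / of_int b) = of_int e / of_int f" by blast
qed
lemma pf_divide: "x \<in> pfset \<Longrightarrow> y \<in> pfset \<Longrightarrow> x / y \<in> pfset"
  by (simp add: divide_inverse pf_times pf_inverse)
lemma pf_plus: "x \<in> pfset \<Longrightarrow> y \<in> pfset \<Longrightarrow> x + y \<in> pfset"
proof -
  assume "x \<in> pfset" "y \<in> pfset"
  then obtain a b c d where x: "x = of_int a / of_int b" and y: "y = of_int c / of_int d"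
    unfolding pfset_def by auto
  show ?thesis
  proof (cases "(of_int b :: 'a) = 0 \<or> (of_int d :: 'a) = 0")
    case True then show ?thesis using \<open>x \<in> pfset\<close> \<open>y \<in> pfset\<close> x y by auto
  next
    case False
    then have "x + y = of_int (a * d + c * b) / of_int (b * d)"
      unfolding x y by (simp add: field_simps)
    then show ?thesis unfolding pfset_def by blast
  qed
qed
lemma pf_minus: "x \<in> pfset \<Longrightarrow> y \<in> pfset \<Longrightarrow> x - y \<in> pfset"
  using pf_plus[of x "- y"] pf_uminus[of y] by simp

typedef (overloaded) 'k pf = "pfset :: 'k::field set" morphisms rep_pf abs_pf
  using pf_0 by blast

setup_lifting type_definition_pf

instantiation pf :: (field) field
begin
lift_definition zero_pf :: "'a pf" is 0 by (rule pf_0)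
lift_definition one_pf :: "'a pf" is 1 by (rule pf_1)
lift_definition plus_pf :: "'a pf \<Rightarrow> 'a pf \<Rightarrow> 'a pf" is "(+)" by (rule pf_plus)
lift_definition minus_pf :: "'a pf \<Rightarrow> 'a pf \<Rightarrow> 'a pf" is "(-)" by (rule pf_minus)
lift_definition times_pf :: "'a pf \<Rightarrow> 'a pf \<Rightarrow> 'a pf" is "(*)" by (rule pf_times)
lift_definition divide_pf :: "'a pf \<Rightarrow> 'a pf \<Rightarrow> 'a pf" is "(/)" by (rule pf_divide)
lift_definition uminus_pf :: "'a pf \<Rightarrow> 'a pf" is uminus by (rule pf_uminus)
lift_definition inverse_pf :: "'a pf \<Rightarrow> 'a pf" is inverse by (rule pf_inverse)
instance
proof (standard, goal_cases)
  case (1 a b c) show ?case by transfer (rule mult.assoc)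
next case (2 a b) show ?case by transfer (rule mult.commute)
next case (3 a) show ?case by transfer (rule mult_1_left)
next case (4 a b c) show ?case by transfer (rule add.assoc)
next case (5 a b) show ?case by transfer (rule add.commute)
next case (6 a) show ?case by transfer (rule add_0_left)
next case (7 a) show ?case by transfer (rule left_minus)
next case (8 a b) show ?case by transfer (rule diff_conv_add_uminus)
next case (9 a b c) show ?case by transfer (rule distrib_right)
next case 10 show ?case by transfer (rule zero_neq_one)
next case (11 a) then show ?case by transfer (rule left_inverse)
next case (12 a b) show ?case by transfer (rule divide_inverse)
next case 13 show ?case by transfer (rule inverse_zero)
qed
end


lemma av_basic:
  fixes av :: "'k::field \<Rightarrow> real"
  assumes "nonarch_abs av"
  shows av_nonneg: "0 \<le> av x" and av_zero_iff: "av x = 0 \<longleftrightarrow> x = 0"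
    and av_mult: "av (x * y) = av x * av y"
    and av_add: "av (x + y) \<le> max (av x) (av y)"
  using assms unfolding nonarch_abs_def by auto

lemma av_one:
  fixes av :: "'k::field \<Rightarrow> real"
  assumes "nonarch_abs av" shows "av 1 = 1"
proof -
  have "av 1 = av 1 * av 1" using av_mult[OF assms, of 1 1] by simp
  moreover have "av 1 \<noteq> 0" using av_zero_iff[OF assms, of 1] by simp
  ultimately show ?thesis using mult_left_cancel[of "av 1" 1 "av 1"] by simp
qed

lemma av_neg:
  fixes av :: "'k::field \<Rightarrow> real"
  assumes "nonarch_abs av" shows "av (- x) = av x"
proof -
  have "av (-1) * av (-1) = 1" using av_mult[OF assms, of "-1" "-1"] av_one[OF assms] by simp
  moreover have "av (-1) \<ge> 0" using av_nonneg[OF assms] by blast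
  ultimately have "av (-1) = 1"
    using power2_eq_imp_eq[of "av (-1)" 1] by (simp add: power2_eq_square)
  then show ?thesis using av_mult[OF assms, of "-1" x] by simp
qed

lemma av_diff:
  fixes av :: "'k::field \<Rightarrow> real"
  assumes "nonarch_abs av" shows "av (x - y) \<le> max (av x) (av y)"
  using av_add[OF assms, of x "- y"] av_neg[OF assms, of y] by simp

lemma av_nat:
  fixes av :: "'k::field \<Rightarrow> real"
  assumes "nonarch_abs av" shows "av (of_nat n) \<le> 1"
proof (induction n)
  case 0 then show ?case using av_zero_iff[OF assms, of 0] by simp
next
  case (Suc n)
  then show ?case using av_add[OF assms, of "of_nat n" 1] av_one[OF assms] by (simp add: add.commute)
qed

lemma av_int:
  fixes av :: "'k::field \<Rightarrow> real"
  assumes "nonarch_abs av" shows "av (of_int a) \<le> 1"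
proof (cases "a \<ge> 0")
  case True
  define k where "k = nat a"
  have ak: "a = int k" using True unfolding k_def by simp
  show ?thesis unfolding ak using av_nat[OF assms, of k] by simp
next
  case False
  define k where "k = nat (- a)"
  have ak: "a = - int k" using False unfolding k_def by simp
  have "(of_int a :: 'k) = - of_nat k" unfolding ak by simp
  then show ?thesis using av_nat[OF assms, of k] av_neg[OF assms, of "of_nat k"] by simp
qed

lemma av_int_one:
  fixes av :: "'k::field \<Rightarrow> real"
  assumes A: "nonarch_abs av" and C: "CHAR('k) = residue_char av"
    and nz: "(of_int a :: 'k) \<noteq> 0"
  shows "av (of_int a) = 1"
proof -
  have nat: "av (of_nat m :: 'k) = 1" if "(of_nat m :: 'k) \<noteq> 0" for m
  proof (rule ccontr)
    assume "av (of_nat m :: 'k) \<noteq> 1"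
    with av_nat[OF A, of m] have "av (of_nat m :: 'k) < 1" by simp
    then have "m \<in> {n::nat. av (of_nat n :: 'k) < 1}" by simp
    then have "residue_char av dvd m" unfolding residue_char_def by (rule Gcd_dvd)
    then have "CHAR('k) dvd m" using C by simp
    then have "(of_nat m :: 'k) = 0" by (simp add: of_nat_eq_0_iff_char_dvd)
    with that show False by simp
  qed
  show ?thesis
  proof (cases "a \<ge> 0")
    case True
    define k where "k = nat a"
    have ak: "a = int k" using True unfolding k_def by simp
    have "(of_nat k :: 'k) \<noteq> 0" using nz unfolding ak by simp
    then show ?thesis unfolding ak using nat[of k] by simp
  next
    case False
    define k where "k = nat (- a)"
    have ak: "a = - int k" using False unfolding k_def by simp
    have e: "(of_int a :: 'k) = - of_nat k" unfolding ak by simp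
    then have "(of_nat k :: 'k) \<noteq> 0" using nz by simp
    then have "av (of_nat k :: 'k) = 1" by (rule nat)
    then show ?thesis using e av_neg[OF A, of "of_nat k"] by simp
  qed
qed

lemma av_pf:
  fixes av :: "'k::field \<Rightarrow> real"
  assumes A: "nonarch_abs av" and C: "CHAR('k) = residue_char av"
    and x: "x \<in> pfset"
  shows "av x \<le> 1"
proof -
  obtain a b where xe: "x = (of_int a :: 'k) / of_int b" using x unfolding pfset_def by auto
  show ?thesis
  proof (cases "(of_int b :: 'k) = 0")
    case True then show ?thesis using xe av_zero_iff[OF A, of 0] by simp
  next
    case False
    have "av x * av (of_int b) = av (of_int a)" using av_mult[OF A, of x "of_int b"] xe False by simp
    then show ?thesis using av_int_one[OF A C False] av_int[OF A, of a] by simp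
  qed
qed

lemma projection_exists:
  fixes av :: "'k::field \<Rightarrow> real"
  assumes A: "nonarch_abs av" and C: "CHAR('k) = residue_char av" and R: "0 \<le> R"
  shows "\<exists>P. (\<forall>x y. P (x + y) = P x + P y) \<and> (\<forall>x. av x \<le> R \<longrightarrow> P x = x) \<and> (\<forall>x. av (P x) \<le> R)"
proof -
  define s :: "'k pf \<Rightarrow> 'k \<Rightarrow> 'k" where "s = (\<lambda>c x. rep_pf c * x)"
  interpret vs: vector_space s
    by unfold_locales (simp_all add: s_def plus_pf.rep_eq times_pf.rep_eq one_pf.rep_eq
        distrib_left distrib_right mult.assoc)
  interpret vp: vector_space_pair s s by unfold_locales
  define BB where "BB = {x. av x \<le> R}"
  have sub: "vs.subspace BB"
  proof (rule vs.subspaceI)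
    show "0 \<in> BB" using R av_zero_iff[OF A, of 0] unfolding BB_def by simp
    show "x + y \<in> BB" if "x \<in> BB" "y \<in> BB" for x y
      using that av_add[OF A, of x y] unfolding BB_def by auto
    show "s c x \<in> BB" if "x \<in> BB" for c x
    proof -
      have "av (rep_pf c) \<le> 1" using av_pf[OF A C] rep_pf by blast
      then have "av (rep_pf c) * av x \<le> 1 * av x"
        using av_nonneg[OF A] by (intro mult_right_mono) auto
      then show ?thesis using that av_mult[OF A] unfolding BB_def s_def by simp
    qed
  qed
  obtain b where b: "b \<subseteq> BB" "vs.independent b" "BB \<subseteq> vs.span b"
    using vs.maximal_independent_subset[of BB] by blast
  have spb: "vs.span b \<subseteq> BB" using vs.span_minimal[OF b(1) sub] .
  define P where "P = vp.construct b id"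
  have lin: "Vector_Spaces.linear s s P" unfolding P_def by (rule vp.linear_construct[OF b(2)])
  have "\<forall>x y. P (x + y) = P x + P y" using lin unfolding Vector_Spaces.linear_iff by blast
  moreover have "\<forall>x. av x \<le> R \<longrightarrow> P x = x"
  proof (intro allI impI)
    fix x assume "av x \<le> R"
    then have "x \<in> vs.span b" using b(3) unfolding BB_def by blast
    then have "P x = id x"
      by (rule vp.linear_eq_on[OF lin vs.linear_id]) (simp add: P_def vp.construct_basis[OF b(2)])
    then show "P x = x" by simp
  qed
  moreover have "\<forall>x. av (P x) \<le> R"
    using vp.construct_in_span[OF b(2), of id] spb unfolding P_def BB_def by auto
  ultimately show ?thesis by blast
qed


lemma add_sign:
  fixes P :: "'k::field \<Rightarrow> 'k"
  assumes hadd: "\<forall>x y. P (x + y) = P x + (P y :: 'k::field)"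
  shows "P ((-1) ^ i * y) = (-1) ^ i * P y"
proof -
  interpret additive P using hadd by unfold_locales blast
  show ?thesis by (cases "even i") (simp_all add: minus)
qed

lemma delta_P:
  fixes P :: "'k::field \<Rightarrow> 'k"
  assumes hadd: "\<forall>x y. P (x + y) = P x + (P y :: 'k::field)"
  shows "delta G T m (\<lambda>x. P (h x)) = (\<lambda>g. P (delta G T m h g))"
proof -
  interpret additive P using hadd by unfold_locales blast
  show ?thesis
    unfolding delta_def by (rule ext) (simp add: sum add diff add_sign[OF hadd] zero)
qed

lemma delta_diff:
  "delta G T m (h1 - h2) = delta G T m h1 - (delta G T m h2 :: _ \<Rightarrow> 'k::field)"
  unfolding delta_def by (rule ext) (simp add: sum_subtractf algebra_simps)

lemma delta_zero: "delta G T m 0 = (0 :: _ \<Rightarrow> 'k::field)"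
  unfolding delta_def by (rule ext) simp

lemma zero_Cb:
  assumes A: "nonarch_abs av"
  shows "0 \<in> Cb av T m"
  unfolding Cb_def Cc_def cont_into_def using av_zero_iff[OF A, of 0]
  by (auto intro!: exI[of _ "topspace (Gpow T m)"])

lemma Cb_diff:
  assumes A: "nonarch_abs av" and h1: "h1 \<in> Cb av T m" and h2: "h2 \<in> Cb av T m"
  shows "h1 - h2 \<in> Cb av T m"
proof -
  have c1: "cont_into av (Gpow T m) h1" and c2: "cont_into av (Gpow T m) h2"
    using h1 h2 unfolding Cb_def Cc_def by auto
  obtain B1 where B1: "\<forall>x\<in>topspace (Gpow T m). av (h1 x) \<le> B1" using h1 unfolding Cb_def by auto
  obtain B2 where B2: "\<forall>x\<in>topspace (Gpow T m). av (h2 x) \<le> B2" using h2 unfolding Cb_def by auto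
  have "cont_into av (Gpow T m) (h1 - h2)"
    unfolding cont_into_def
  proof (intro ballI allI impI)
    fix x e assume x: "x \<in> topspace (Gpow T m)" and e: "(0::real) < e"
    obtain U1 where U1: "openin (Gpow T m) U1" "x \<in> U1" "\<forall>y\<in>U1. av (h1 y - h1 x) < e"
      using c1 x e unfolding cont_into_def by blast
    obtain U2 where U2: "openin (Gpow T m) U2" "x \<in> U2" "\<forall>y\<in>U2. av (h2 y - h2 x) < e"
      using c2 x e unfolding cont_into_def by blast
    show "\<exists>U. openin (Gpow T m) U \<and> x \<in> U \<and> (\<forall>y\<in>U. av ((h1 - h2) y - (h1 - h2) x) < e)"
    proof (intro exI conjI ballI)
      show "openin (Gpow T m) (U1 \<inter> U2)" using U1 U2 by auto
      show "x \<in> U1 \<inter> U2" using U1 U2 by auto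
      fix y assume y: "y \<in> U1 \<inter> U2"
      have eq: "(h1 - h2) y - (h1 - h2) x = (h1 y - h1 x) - (h2 y - h2 x)" by (simp add: algebra_simps)
      have "av ((h1 y - h1 x) - (h2 y - h2 x)) \<le> max (av (h1 y - h1 x)) (av (h2 y - h2 x))"
        by (rule av_diff[OF A])
      moreover have "max (av (h1 y - h1 x)) (av (h2 y - h2 x)) < e" using U1 U2 y by auto
      ultimately show "av ((h1 - h2) y - (h1 - h2) x) < e" unfolding eq by linarith
    qed
  qed
  moreover have "\<forall>x. x \<notin> topspace (Gpow T m) \<longrightarrow> (h1 - h2) x = 0"
    using h1 h2 unfolding Cb_def Cc_def by auto
  moreover have "\<forall>x\<in>topspace (Gpow T m). av ((h1 - h2) x) \<le> max B1 B2"
  proof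
    fix x assume x: "x \<in> topspace (Gpow T m)"
    have "av (h1 x - h2 x) \<le> max (av (h1 x)) (av (h2 x))" by (rule av_diff[OF A])
    moreover have "av (h1 x) \<le> B1" "av (h2 x) \<le> B2" using B1 B2 x by auto
    ultimately show "av ((h1 - h2) x) \<le> max B1 B2" by (auto simp: max_def split: if_splits)
  qed
  ultimately show ?thesis unfolding Cb_def Cc_def by blast
qed

lemma Bb_diff:
  assumes A: "nonarch_abs av" and "u \<in> Bb av G T n" and "v \<in> Bb av G T n"
  shows "u - v \<in> Bb av G T n"
proof -
  obtain h1 h2 where h: "h1 \<in> Cb av T (n - 1)" "h2 \<in> Cb av T (n - 1)"
    "u = delta G T (n - 1) h1" "v = delta G T (n - 1) h2"
    using assms unfolding Bb_def by auto
  have "u - v = delta G T (n - 1) (h1 - h2)" using h(3,4) by (simp add: delta_diff)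
  then show ?thesis unfolding Bb_def by (rule image_eqI[OF _ Cb_diff[OF A h(1,2)]])
qed

lemma zero_Bb:
  assumes A: "nonarch_abs av"
  shows "0 \<in> Bb av G T n"
  unfolding Bb_def by (rule image_eqI[OF _ zero_Cb[OF A]]) (simp add: delta_zero)

lemma zero_Bc:
  assumes A: "nonarch_abs av"
  shows "0 \<in> Bc av G T n"
proof -
  have "0 \<in> Cc av T (n - 1)" using zero_Cb[OF A, of T "n - 1"] unfolding Cb_def by blast
  then show ?thesis unfolding Bc_def by (rule image_eqI[rotated]) (simp add: delta_zero)
qed

lemma bounded_coboundary:
  fixes av :: "'k::field \<Rightarrow> real"
  assumes A: "nonarch_abs av" and C: "CHAR('k) = residue_char av"
    and h: "h \<in> Cc av T m" and B: "\<forall>x. av (delta G T m h x) \<le> B"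
  shows "delta G T m h \<in> (\<lambda>h. delta G T m h) ` Cb av T m"
proof -
  define R where "R = max B 1"
  have R0: "0 < R" unfolding R_def by simp
  obtain P where hadd: "\<forall>x y. P (x + y) = P x + P y" and Pid: "\<forall>x. av x \<le> R \<longrightarrow> P x = x"
    and Pb: "\<forall>x. av (P x) \<le> R"
    using projection_exists[OF A C, of R] R0 by auto
  interpret additive P using hadd by unfold_locales blast
  define h' where "h' = (\<lambda>x. P (h x))"
  have "delta G T m h' = (\<lambda>g. P (delta G T m h g))" unfolding h'_def by (rule delta_P[OF hadd])
  also have "\<dots> = delta G T m h"
  proof (rule ext)
    fix g
    have "av (delta G T m h g) \<le> R" using B unfolding R_def by (meson le_max_iff_disj)
    then show "P (delta G T m h g) = delta G T m h g" using Pid by blast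
  qed
  finally have d: "delta G T m h' = delta G T m h" .
  have "cont_into av (Gpow T m) h'"
    unfolding cont_into_def
  proof (intro ballI allI impI)
    fix x e assume x: "x \<in> topspace (Gpow T m)" and e: "(0::real) < e"
    obtain U where U: "openin (Gpow T m) U" "x \<in> U" "\<forall>y\<in>U. av (h y - h x) < min e R"
    proof -
      have "cont_into av (Gpow T m) h" using h unfolding Cc_def by blast
      moreover have "0 < min e R" using e R0 by simp
      ultimately show ?thesis using x that unfolding cont_into_def by blast
    qed
    show "\<exists>U. openin (Gpow T m) U \<and> x \<in> U \<and> (\<forall>y\<in>U. av (h' y - h' x) < e)"
    proof (intro exI conjI ballI)
      show "openin (Gpow T m) U" "x \<in> U" using U by auto
      fix y assume y: "y \<in> U"
      have "h' y - h' x = P (h y - h x)" unfolding h'_def by (simp add: diff)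
      also have "\<dots> = h y - h x" using Pid U y by auto
      finally show "av (h' y - h' x) < e" using U y by auto
    qed
  qed
  moreover have "\<forall>x. x \<notin> topspace (Gpow T m) \<longrightarrow> h' x = 0"
    using h unfolding Cc_def h'_def by (auto simp: zero)
  moreover have "\<forall>x\<in>topspace (Gpow T m). av (h' x) \<le> R" using Pb unfolding h'_def by auto
  ultimately have "h' \<in> Cb av T m" unfolding Cb_def Cc_def by blast
  then show ?thesis by (rule image_eqI[rotated]) (simp add: d)
qed


lemma Bb_add:
  assumes A: "nonarch_abs av" and u: "u \<in> Bb av G T n" and v: "v \<in> Bb av G T n"
  shows "u + v \<in> Bb av G T n"
proof -
  have "0 - v \<in> Bb av G T n" using Bb_diff[OF A zero_Bb[OF A] v] .
  from Bb_diff[OF A u this] show ?thesis by simp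
qed

lemma cls_b_self:
  assumes A: "nonarch_abs av" and f: "f \<in> Zb av G T n"
  shows "f \<in> cls_b av G T n f"
  unfolding cls_b_def using f zero_Bb[OF A] by simp

lemma cls_b_eq:
  assumes A: "nonarch_abs av" and d: "f - f' \<in> Bb av G T n"
  shows "cls_b av G T n f' = cls_b av G T n f"
proof -
  have "f - g \<in> Bb av G T n \<longleftrightarrow> f' - g \<in> Bb av G T n" for g
  proof
    assume "f - g \<in> Bb av G T n"
    from Bb_diff[OF A this d] show "f' - g \<in> Bb av G T n" by (simp add: algebra_simps)
  next
    assume "f' - g \<in> Bb av G T n"
    from Bb_add[OF A d this] show "f - g \<in> Bb av G T n" by (simp add: algebra_simps)
  qed
  then show ?thesis unfolding cls_b_def by blast
qed

lemma rep_in_class: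
  assumes A: "nonarch_abs av" and C: "C \<in> Hcb av G T n"
  shows "(SOME f. f \<in> C) \<in> Zb av G T n \<and> cls_b av G T n (SOME f. f \<in> C) = C"
proof -
  obtain f where f: "f \<in> Zb av G T n" and Ce: "C = cls_b av G T n f"
    using C unfolding Hcb_def by auto
  have "f \<in> C" using cls_b_self[OF A f] Ce by simp
  then have s: "(SOME f. f \<in> C) \<in> C" by (rule someI[of "\<lambda>f. f \<in> C"])
  then have "(SOME f. f \<in> C) \<in> Zb av G T n" "f - (SOME f. f \<in> C) \<in> Bb av G T n"
    unfolding Ce cls_b_def by auto
  then show ?thesis using cls_b_eq[OF A] Ce by blast
qed

theorem theorem9p41:
  fixes av :: "'k::field \<Rightarrow> real"
    and G :: "('g, 'b) monoid_scheme" and T :: "'g topology" and n :: nat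
  assumes "nonarch_abs av"
    and "CHAR('k) = residue_char av"
    and "topological_group G T"
    and "n \<ge> 1"
  shows "inj_on (comparison av G T n) (Hcb av G T n)"
proof (rule inj_onI)
  note A = assms(1) and Ch = assms(2)
  fix C1 C2 assume C1: "C1 \<in> Hcb av G T n" and C2: "C2 \<in> Hcb av G T n"
    and eq: "comparison av G T n C1 = comparison av G T n C2"
  define f1 where "f1 = (SOME f. f \<in> C1)"
  define f2 where "f2 = (SOME f. f \<in> C2)"
  have f1: "f1 \<in> Zb av G T n" "cls_b av G T n f1 = C1" using rep_in_class[OF A C1] f1_def by auto
  have f2: "f2 \<in> Zb av G T n" "cls_b av G T n f2 = C2" using rep_in_class[OF A C2] f2_def by auto
  have "cls_c av G T n f1 = cls_c av G T n f2" using eq unfolding comparison_def f1_def f2_def .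
  moreover have "f1 \<in> cls_c av G T n f1"
    using f1(1) zero_Bc[OF A] unfolding cls_c_def Zb_def Zc_def Cb_def by auto
  ultimately have "f1 \<in> cls_c av G T n f2" by simp
  then have "f2 - f1 \<in> Bc av G T n" unfolding cls_c_def by simp
  then obtain h where h: "h \<in> Cc av T (n - 1)" and he: "f2 - f1 = delta G T (n - 1) h"
    unfolding Bc_def by auto
  obtain B1 where B1: "\<forall>x\<in>topspace (Gpow T n). av (f1 x) \<le> B1"
    using f1(1) unfolding Zb_def Cb_def by auto
  obtain B2 where B2: "\<forall>x\<in>topspace (Gpow T n). av (f2 x) \<le> B2"
    using f2(1) unfolding Zb_def Cb_def by auto
  have z1: "\<forall>x. x \<notin> topspace (Gpow T n) \<longrightarrow> f1 x = 0"
    using f1(1) unfolding Zb_def Cb_def Cc_def by auto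
  have z2: "\<forall>x. x \<notin> topspace (Gpow T n) \<longrightarrow> f2 x = 0"
    using f2(1) unfolding Zb_def Cb_def Cc_def by auto
  have dx: "delta G T (n - 1) h x = f2 x - f1 x" for x using fun_cong[OF he, of x] by simp
  have bnd: "\<forall>x. av (delta G T (n - 1) h x) \<le> max (max B1 B2) 0"
  proof
    fix x
    show "av (delta G T (n - 1) h x) \<le> max (max B1 B2) 0"
    proof (cases "x \<in> topspace (Gpow T n)")
      case True
      have "av (f2 x - f1 x) \<le> max (av (f2 x)) (av (f1 x))" by (rule av_diff[OF A])
      moreover have "av (f2 x) \<le> B2" "av (f1 x) \<le> B1" using B1 B2 True by auto
      ultimately have "av (f2 x - f1 x) \<le> max (max B1 B2) 0" by (auto simp: max_def split: if_splits)
      then show ?thesis unfolding dx .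
    next
      case False
      then have "delta G T (n - 1) h x = 0" unfolding dx using z1 z2 by simp
      then show ?thesis using av_zero_iff[OF A, of 0] by simp
    qed
  qed
  have "f2 - f1 \<in> Bb av G T n"
    unfolding Bb_def he by (rule bounded_coboundary[OF A Ch h bnd])
  then have "cls_b av G T n f1 = cls_b av G T n f2" by (rule cls_b_eq[OF A])
  then show "C1 = C2" using f1 f2 by simp
qed

end
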